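(* Let $d\ge2$. There is a constant $C_d\ge 2$ depending only on $d$ such that the following holds. Let $z\in\mathbb{R}^d_+$ and $r\ge C_d$, put $z_0=\sum_{j=1}^d z_j$ and $b=z_0-r$, and assume $b> C_d$. Let $D=\{y\in\mathbb{R}^d_+:|z-y|_1<r\}$ and let $\xi\in D$, $\xi_0=\sum_j\xi_j$. Then for each $t\in(b,b+2r)$ there exists a $(d-1)$-dimensional parallelepiped $P_t\subset\Pi_t$, all of whose edges are parallel to vectors in $V$, which contains $D_t=D\cap\Pi_t$ and contains $\xi_t$, and satisfies $$\lambda_t(P_t)\le C\,\big[1+(t-b)\vee(\xi_0-b)\big]^{d-1}\,e^{b}\,\mu(D),$$ where $C>0$ depends only on $d$.
   Context: $\mathbb{R}^d_+=(0,\infty)^d$; $\mu$ is the measure on $\mathbb{R}^d_+$ with density $\exp(-|x|_1)$, $|x|_1=\sum_i|x_i|$. For $t\in\mathbb{R}$, $\Pi_t=\{x\in\mathbb{R}^d:\sum_j x_j=t\}$, $\lambda_t$ is $(d-1)$-dimensional Lebesgue measure on $\Pi_t$, and $\xi_t$ is the orthogonal projection of $\xi$ onto $\Pi_t$. $V$ is the set of vectors obtained by permuting the coordinates of $(1,-1,0,\dots,0)\in\mathbb{R}^d$. $a\vee b=\max(a,b)$. *)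

theory Defs
  imports "HOL-Analysis.Analysis"
begin

text \<open>Points of R^d are vectors of type real^'n, d = CARD('n).\<close>

definition norm1 :: "real^'n \<Rightarrow> real" where
  "norm1 x = (\<Sum>i\<in>UNIV. \<bar>x $ i\<bar>)"

definition coord_sum :: "real^'n \<Rightarrow> real" where
  "coord_sum x = (\<Sum>i\<in>UNIV. x $ i)"

definition pos_orthant :: "(real^'n) set" where
  "pos_orthant = {x. \<forall>i. 0 < x $ i}"

definition mu :: "(real^'n) set \<Rightarrow> ennreal" where
  "mu A = (\<integral>\<^sup>+ x. ennreal (exp (- norm1 x)) * indicator (A \<inter> pos_orthant) x \<partial>lebesgue)"

definition hplane :: "real \<Rightarrow> (real^'n) set" where
  "hplane t = {x. coord_sum x = t}"

definition ones :: "real^'n" where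
  "ones = (\<chi> i. 1)"

definition hnormal :: "real^'n" where
  "hnormal = (1 / sqrt (real CARD('n))) *\<^sub>R ones"

text \<open>(d-1)-dimensional Lebesgue measure lambda_t on Pi_t: for A \<subseteq> Pi_t,
  lambda_t(A) equals the d-dimensional Lebesgue measure of the prism of unit
  height over A in the normal direction.\<close>
definition hmeasure :: "(real^'n) set \<Rightarrow> ennreal" where
  "hmeasure A = emeasure lebesgue {x + s *\<^sub>R hnormal | x s. x \<in> A \<and> s \<in> {0..1}}"

text \<open>Orthogonal projection of xi onto Pi_t.\<close>
definition hproj :: "real \<Rightarrow> real^'n \<Rightarrow> real^'n" where
  "hproj t \<xi> = \<xi> - ((coord_sum \<xi> - t) / real CARD('n)) *\<^sub>R ones"

definition Vset :: "(real^'n) set" where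
  "Vset = {v. \<exists>i j. i \<noteq> j \<and> v = (\<chi> k. if k = i then 1 else if k = j then -1 else 0)}"

definition parallelepiped :: "real^'n \<Rightarrow> (nat \<Rightarrow> real^'n) \<Rightarrow> nat \<Rightarrow> (real^'n) set" where
  "parallelepiped p e k =
     {p + (\<Sum>i<k. s i *\<^sub>R e i) | s. \<forall>i<k. 0 \<le> s i \<and> s i \<le> 1}"

definition V_parallelepiped :: "(real^'n) set \<Rightarrow> bool" where
  "V_parallelepiped P \<longleftrightarrow>
     (\<exists>p e. P = parallelepiped p e (CARD('n) - 1)
        \<and> inj_on e {..<CARD('n) - 1}
        \<and> independent (e ` {..<CARD('n) - 1})
        \<and> (\<forall>i<CARD('n) - 1. \<exists>v\<in>Vset. \<exists>c. e i = c *\<^sub>R v))"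

end

theory Submission
  imports Defs "HOL-Analysis.Analysis"
begin

lemma pim_slab:
  fixes A :: "'a set" and lo hi :: "'a \<Rightarrow> real"
  assumes fin: "finite A" and bm: "bm \<notin> A" and lh: "\<forall>i\<in>A. lo i \<le> hi i" and cc: "c \<le> c'"
  shows "emeasure (Pi\<^sub>M (insert bm A) (\<lambda>_. lborel))
     ({f. (\<forall>i\<in>A. lo i \<le> f i \<and> f i \<le> hi i) \<and> c \<le> sum f (insert bm A) \<and> sum f (insert bm A) \<le> c'}
        \<inter> space (Pi\<^sub>M (insert bm A) (\<lambda>_. lborel)))
     = ennreal ((\<Prod>i\<in>A. hi i - lo i) * (c' - c))"
proof -
  interpret product_sigma_finite "\<lambda>_. lborel" by standard
  let ?M = "\<lambda>A. Pi\<^sub>M A (\<lambda>_::'a. lborel)"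
  let ?S = "{f. (\<forall>i\<in>A. lo i \<le> f i \<and> f i \<le> hi i) \<and> c \<le> sum f (insert bm A) \<and> sum f (insert bm A) \<le> c'}
        \<inter> space (?M (insert bm A))"
  have meas: "?S \<in> sets (?M (insert bm A))"
  proof -
    have "?S = {f \<in> space (?M (insert bm A)). (\<forall>i\<in>A. lo i \<le> f i \<and> f i \<le> hi i) \<and> c \<le> sum f (insert bm A) \<and> sum f (insert bm A) \<le> c'}"
      by auto
    also have "\<dots> \<in> sets (?M (insert bm A))"
      using fin by measurable
    finally show ?thesis .
  qed
  have "emeasure (?M (insert bm A)) ?S = (\<integral>\<^sup>+ f. indicator ?S f \<partial>?M (insert bm A))"
    using meas by simp
  also have "\<dots> = (\<integral>\<^sup>+ x. (\<integral>\<^sup>+ y. indicator ?S (x(bm := y)) \<partial>lborel) \<partial>?M A)"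
    using meas fin bm by (intro product_nn_integral_insert) auto
  also have "\<dots> = (\<integral>\<^sup>+ x. (\<integral>\<^sup>+ y. indicator (Pi\<^sub>E A (\<lambda>i. {lo i..hi i})) x *
                     indicator {c - sum x A..c' - sum x A} y \<partial>lborel) \<partial>?M A)"
  proof (intro nn_integral_cong)
    fix x :: "'a \<Rightarrow> real" and y :: real assume x: "x \<in> space (?M A)"
    have s: "sum (x(bm := y)) (insert bm A) = y + sum x A"
      using fin bm by (simp add: sum.insert) (intro sum.cong, auto)
    have "x(bm := y) \<in> space (?M (insert bm A))"
      using x by (auto simp: space_PiM PiE_def extensional_def)
    moreover have "x \<in> extensional A" using x by (auto simp: space_PiM PiE_def)
    ultimately show "indicator ?S (x(bm := y)) = indicator (Pi\<^sub>E A (\<lambda>i. {lo i..hi i})) x *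
                     (indicator {c - sum x A..c' - sum x A} y :: ennreal)"
      using bm s by (auto simp: indicator_def PiE_def Pi_def)
  qed
  also have "\<dots> = (\<integral>\<^sup>+ x. indicator (Pi\<^sub>E A (\<lambda>i. {lo i..hi i})) x * ennreal (c' - c) \<partial>?M A)"
  proof (intro nn_integral_cong)
    fix x
    show "(\<integral>\<^sup>+ y. indicator (Pi\<^sub>E A (\<lambda>i. {lo i..hi i})) x *
                     indicator {c - sum x A..c' - sum x A} y \<partial>lborel) = indicator (Pi\<^sub>E A (\<lambda>i. {lo i..hi i})) x * ennreal (c' - c)"
      using cc by (subst nn_integral_cmult_indicator) auto
  qed
  also have "\<dots> = ennreal (c' - c) * emeasure (?M A) (Pi\<^sub>E A (\<lambda>i. {lo i..hi i}))"
    using fin by (subst nn_integral_multc) (auto simp: mult.commute)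
  also have "emeasure (?M A) (Pi\<^sub>E A (\<lambda>i. {lo i..hi i})) = (\<Prod>i\<in>A. ennreal (hi i - lo i))"
    using fin lh by (subst emeasure_PiM) (auto intro!: prod.cong)
  also have "\<dots> = ennreal (\<Prod>i\<in>A. hi i - lo i)"
    using lh by (intro prod_ennreal) auto
  finally show ?thesis using cc lh
    by (simp add: ennreal_mult' [symmetric] mult.commute prod_nonneg)
qed

lemma axis_inj: "inj (\<lambda>i::'n::finite. axis i (1::real))"
  by (auto simp: inj_on_def axis_eq_axis)

lemma Basis_cart_eq: "(Basis :: (real^'n::finite) set) = range (\<lambda>i. axis i 1)"
  by (auto simp: Basis_vec_def)

lemma sum_basis_nth:
  fixes f :: "(real^'n::finite) \<Rightarrow> real"
  shows "(\<Sum>b\<in>Basis. f b *\<^sub>R b) $ i = f (axis i 1)"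
proof -
  have "(\<Sum>b\<in>Basis. f b *\<^sub>R b) $ i = (\<Sum>b\<in>Basis. f b * b $ i)"
    by (simp add: sum_component)
  also have "\<dots> = (\<Sum>j\<in>UNIV. f (axis j 1) * axis j 1 $ i)"
    by (simp add: Basis_cart_eq sum.reindex[OF axis_inj])
  also have "\<dots> = f (axis i 1)"
    by (simp add: axis_def if_distrib cong: if_cong)
  finally show ?thesis .
qed

lemma slab_measure:
  fixes m :: "'n::finite" and \<alpha> w :: "'n \<Rightarrow> real"
  assumes w: "\<forall>i. i \<noteq> m \<longrightarrow> 0 \<le> w i" and cc: "c \<le> c'"
  shows "{x::real^'n. (\<forall>i. i \<noteq> m \<longrightarrow> \<alpha> i \<le> x$i \<and> x$i \<le> \<alpha> i + w i) \<and> c \<le> coord_sum x \<and> coord_sum x \<le> c'} \<in> sets lebesgue"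
    and "emeasure lebesgue {x::real^'n. (\<forall>i. i \<noteq> m \<longrightarrow> \<alpha> i \<le> x$i \<and> x$i \<le> \<alpha> i + w i) \<and> c \<le> coord_sum x \<and> coord_sum x \<le> c'}
         = ennreal ((\<Prod>i\<in>UNIV-{m}. w i) * (c' - c))"
proof -
  let ?T = "{x::real^'n. (\<forall>i. i \<noteq> m \<longrightarrow> \<alpha> i \<le> x$i \<and> x$i \<le> \<alpha> i + w i) \<and> c \<le> coord_sum x \<and> coord_sum x \<le> c'}"
  have Tb: "?T \<in> sets borel"
  proof -
    have "?T = {x \<in> space borel. (\<forall>i\<in>UNIV - {m}. \<alpha> i \<le> x$i \<and> x$i \<le> \<alpha> i + w i) \<and> c \<le> (\<Sum>i\<in>UNIV. x$i) \<and> (\<Sum>i\<in>UNIV. x$i) \<le> c'}"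
      by (auto simp: coord_sum_def)
    also have "\<dots> \<in> sets borel" by measurable
    finally show ?thesis .
  qed
  then show "?T \<in> sets lebesgue" by simp
  define g where "g = inv_into UNIV (\<lambda>i::'n. axis i (1::real))"
  have g: "g (axis i 1) = i" for i unfolding g_def by (rule inv_into_f_f[OF axis_inj]) simp
  let ?\<phi> = "\<lambda>f. \<Sum>b\<in>(Basis::(real^'n) set). f b *\<^sub>R b"
  let ?A = "(Basis::(real^'n) set) - {axis m 1}"
  have BA: "(Basis::(real^'n) set) = insert (axis m 1) ?A"
    by (auto simp: Basis_cart_eq)
  have "emeasure lebesgue ?T = emeasure lborel ?T"
    using Tb by simp
  also have "\<dots> = emeasure (distr (Pi\<^sub>M Basis (\<lambda>b. lborel)) borel ?\<phi>) ?T"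
    by (subst lborel_eq) simp
  also have "\<dots> = emeasure (Pi\<^sub>M Basis (\<lambda>b. lborel)) (?\<phi> -` ?T \<inter> space (Pi\<^sub>M Basis (\<lambda>b. lborel)))"
    using Tb by (subst emeasure_distr) auto
  also have "?\<phi> -` ?T \<inter> space (Pi\<^sub>M Basis (\<lambda>b. lborel)) =
     {f. (\<forall>b\<in>?A. \<alpha> (g b) \<le> f b \<and> f b \<le> \<alpha> (g b) + w (g b)) \<and> c \<le> sum f Basis \<and> sum f Basis \<le> c'}
        \<inter> space (Pi\<^sub>M Basis (\<lambda>_. lborel))"
  proof -
    have cs: "coord_sum (?\<phi> f) = sum f Basis" for f
      by (simp only: coord_sum_def sum_basis_nth) (simp add: Basis_cart_eq sum.reindex[OF axis_inj])
    have nth: "(\<Sum>xa\<in>Basis. f xa * xa $ i) = f (axis i 1)" for f :: "real^'n \<Rightarrow> real" and i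
      using sum_basis_nth[of f i] by (simp add: sum_component)
    have gb: "b \<in> Basis \<Longrightarrow> axis (g b) 1 = b" for b :: "real^'n"
      unfolding g_def by (rule f_inv_into_f) (simp add: Basis_cart_eq)
    have gm: "b \<in> Basis \<Longrightarrow> b \<noteq> axis m 1 \<Longrightarrow> g b \<noteq> m" for b
      using gb by force
    show ?thesis
      apply (auto simp: cs sum_basis_nth g nth)
      subgoal for x b using gm[of b] gb[of b] by (drule_tac x="g b" in spec) auto
      subgoal for x b using gm[of b] gb[of b] by (drule_tac x="g b" in spec) auto
      subgoal for x i by (drule_tac x="axis i 1" in bspec) (auto simp: g axis_eq_axis Basis_cart_eq)
      subgoal for x i by (drule_tac x="axis i 1" in bspec) (auto simp: g axis_eq_axis Basis_cart_eq)
      done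
  qed
  also have "emeasure (Pi\<^sub>M Basis (\<lambda>_. lborel)) \<dots> =
      ennreal ((\<Prod>b\<in>?A. \<alpha> (g b) + w (g b) - \<alpha> (g b)) * (c' - c))"
  proof -
    have "emeasure (Pi\<^sub>M (insert (axis m 1) ?A) (\<lambda>_. lborel)) 
     ({f. (\<forall>b\<in>?A. \<alpha> (g b) \<le> f b \<and> f b \<le> \<alpha> (g b) + w (g b)) \<and> c \<le> sum f (insert (axis m 1) ?A) \<and> sum f (insert (axis m 1) ?A) \<le> c'}
        \<inter> space (Pi\<^sub>M (insert (axis m 1) ?A) (\<lambda>_. lborel))) =
      ennreal ((\<Prod>b\<in>?A. \<alpha> (g b) + w (g b) - \<alpha> (g b)) * (c' - c))"
      by (rule pim_slab) (use w cc in \<open>auto simp: Basis_cart_eq g\<close>)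
    then show ?thesis unfolding BA[symmetric] .
  qed
  also have "(\<Prod>b\<in>?A. \<alpha> (g b) + w (g b) - \<alpha> (g b)) = (\<Prod>i\<in>UNIV-{m}. w i)"
  proof -
    have "?A = (\<lambda>i. axis i 1) ` (UNIV - {m})"
      by (auto simp: Basis_cart_eq axis_eq_axis)
    then show ?thesis
      by (simp add: prod.reindex inj_on_def axis_eq_axis g)
  qed
  finally show "emeasure lebesgue ?T = ennreal ((\<Prod>i\<in>UNIV-{m}. w i) * (c' - c))" .
qed

lemma coord_sum_add: "coord_sum (x + y) = coord_sum x + coord_sum (y::real^'n::finite)"
  by (simp add: coord_sum_def sum.distrib)
lemma coord_sum_scale: "coord_sum (c *\<^sub>R x) = c * coord_sum (x::real^'n::finite)"
  by (simp add: coord_sum_def sum_distrib_left)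
lemma coord_sum_sum: "coord_sum (\<Sum>j\<in>A. f j) = (\<Sum>j\<in>A. coord_sum (f j :: real^'n::finite))"
  by (simp add: coord_sum_def sum_component sum.swap[of _ UNIV])
lemma coord_sum_axis: "coord_sum (axis i 1 :: real^'n::finite) = 1"
  by (simp add: coord_sum_def axis_def)
lemma coord_sum_diff: "coord_sum (x - y) = coord_sum x - coord_sum (y::real^'n::finite)"
  by (simp add: coord_sum_def sum_subtractf)

lemma coord_sum_split: "coord_sum (x::real^'n::finite) = x $ m + (\<Sum>i\<in>UNIV-{m}. x $ i)"
  unfolding coord_sum_def by (simp add: sum.remove)

lemma eq_by_coord_sum:
  fixes x y :: "real^'n::finite"
  assumes "coord_sum x = coord_sum y" "\<forall>i. i \<noteq> m \<longrightarrow> x $ i = y $ i"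
  shows "x = y"
proof -
  have "(\<Sum>i\<in>UNIV-{m}. x $ i) = (\<Sum>i\<in>UNIV-{m}. y $ i)" using assms(2) by (intro sum.cong) auto
  then have "x $ m = y $ m" using assms(1) coord_sum_split[of x m] coord_sum_split[of y m] by simp
  then show ?thesis using assms(2) by (metis vec_eq_iff)
qed

lemma V_par_box:
  fixes m :: "'n::finite" and \<alpha> W :: "'n \<Rightarrow> real" and t :: real
  assumes d2: "CARD('n) \<ge> 2" and Wp: "\<forall>i. i \<noteq> m \<longrightarrow> 0 < W i"
  shows "V_parallelepiped {y::real^'n. coord_sum y = t \<and> (\<forall>i. i \<noteq> m \<longrightarrow> \<alpha> i \<le> y$i \<and> y$i \<le> \<alpha> i + W i)}"
proof -
  define n where "n = CARD('n) - 1"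
  have cardA: "card (UNIV - {m}) = n" by (simp add: card_Diff_singleton n_def)
  obtain k where k: "bij_betw k {..<n} (UNIV - {m})"
    using ex_bij_betw_nat_finite[of "UNIV - {m::'n}"] cardA by (auto simp: atLeast0LessThan)
  have kinj: "inj_on k {..<n}" and kim: "k ` {..<n} = UNIV - {m}"
    using k by (auto simp: bij_betw_def)
  have knm: "j < n \<Longrightarrow> k j \<noteq> m" for j using kim by auto
  define kinv where "kinv = inv_into {..<n} k"
  have kinv1: "i \<noteq> m \<Longrightarrow> kinv i < n" for i unfolding kinv_def
    using kim by (metis Diff_iff UNIV_I inv_into_into lessThan_iff singletonD)
  have kinv2: "i \<noteq> m \<Longrightarrow> k (kinv i) = i" for i unfolding kinv_def
    using kim by (metis Diff_iff UNIV_I f_inv_into_f singletonD)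
  have kinv3: "j < n \<Longrightarrow> kinv (k j) = j" for j unfolding kinv_def
    using kinj by (simp add: inv_into_f_f)
  define v where "v j = (axis (k j) 1 - axis m 1 :: real^'n)" for j
  define e where "e j = W (k j) *\<^sub>R v j" for j
  define p where "p = (\<chi> i. if i = m then t - (\<Sum>j\<in>UNIV-{m}. \<alpha> j) else \<alpha> i)"
  have csp: "coord_sum p = t"
    unfolding coord_sum_split[of p m] by (simp add: p_def)
  have csv: "j < n \<Longrightarrow> coord_sum (v j) = 0" for j
    by (simp add: v_def coord_sum_diff coord_sum_axis)
  have vq: "q \<noteq> m \<Longrightarrow> v j $ q = (if q = k j then 1 else 0)" for j q
    by (simp add: v_def axis_def)
  have comb_q: "(\<Sum>j<n. s j *\<^sub>R e j) $ q = s (kinv q) * W q" if q: "q \<noteq> m" for s q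
  proof -
    have "(\<Sum>j<n. s j *\<^sub>R e j) $ q = (\<Sum>j<n. s j * W (k j) * (if q = k j then 1 else 0))"
      using q by (simp add: sum_component e_def vq)
    also have "\<dots> = (\<Sum>j\<in>{kinv q}. s j * W (k j))"
    proof (rule sum.mono_neutral_cong_right)
      show "{kinv q} \<subseteq> {..<n}" using kinv1[OF q] by simp
      show "\<forall>j\<in>{..<n} - {kinv q}. s j * W (k j) * (if q = k j then 1 else 0) = 0"
        using kinv3 by auto
      show "\<And>j. j \<in> {kinv q} \<Longrightarrow> s j * W (k j) * (if q = k j then 1 else 0) = s j * W (k j)"
        using kinv2[OF q] by auto
    qed auto
    finally show ?thesis using kinv2[OF q] by simp
  qed
  have comb_cs: "coord_sum (\<Sum>j<n. s j *\<^sub>R e j) = 0" for s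
    by (simp add: coord_sum_sum coord_sum_scale e_def csv)
  let ?Q = "{y::real^'n. coord_sum y = t \<and> (\<forall>i. i \<noteq> m \<longrightarrow> \<alpha> i \<le> y$i \<and> y$i \<le> \<alpha> i + W i)}"
  have Qeq: "?Q = parallelepiped p e n"
  proof
    show "parallelepiped p e n \<subseteq> ?Q"
    proof
      fix y assume "y \<in> parallelepiped p e n"
      then obtain s where s: "\<forall>i<n. 0 \<le> s i \<and> s i \<le> 1" and y: "y = p + (\<Sum>i<n. s i *\<^sub>R e i)"
        unfolding parallelepiped_def by auto
      have "coord_sum y = t" using comb_cs[of s] unfolding y coord_sum_add csp by simp
      moreover have "\<alpha> i \<le> y$i \<and> y$i \<le> \<alpha> i + W i" if i: "i \<noteq> m" for i
      proof -
        have "y $ i = \<alpha> i + s (kinv i) * W i" unfolding y vector_add_component comb_q[OF i] using i by (simp add: p_def)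
        moreover have "0 \<le> s (kinv i)" "s (kinv i) \<le> 1" using s kinv1[OF i] by auto
        moreover have "0 < W i" using Wp i by auto
        ultimately show ?thesis by (simp add: mult_left_le_one_le)
      qed
      ultimately show "y \<in> ?Q" by auto
    qed
    show "?Q \<subseteq> parallelepiped p e n"
    proof
      fix y assume y: "y \<in> ?Q"
      define s where "s j = (y $ k j - \<alpha> (k j)) / W (k j)" for j
      have s01: "0 \<le> s j \<and> s j \<le> 1" if "j < n" for j
        using y Wp knm[OF that] unfolding s_def by (auto simp: divide_simps)
      have "p + (\<Sum>j<n. s j *\<^sub>R e j) = y"
      proof (rule eq_by_coord_sum[where m = m])
        show "coord_sum (p + (\<Sum>j<n. s j *\<^sub>R e j)) = coord_sum y"
          using y by (simp add: coord_sum_add comb_cs csp)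
        show "\<forall>i. i \<noteq> m \<longrightarrow> (p + (\<Sum>j<n. s j *\<^sub>R e j)) $ i = y $ i"
          using Wp by (auto simp: comb_q p_def s_def kinv2 simp del: sum_component)
      qed
      then show "y \<in> parallelepiped p e n"
        unfolding parallelepiped_def using s01 by blast
    qed
  qed
  have ekj: "j < n \<Longrightarrow> j' < n \<Longrightarrow> e j' $ k j = (if j' = j then W (k j) else 0)" for j j'
    using kinj knm by (auto simp: e_def vq inj_on_def)
  have einj: "inj_on e {..<n}"
  proof (rule inj_onI)
    fix j j' assume j: "j \<in> {..<n}" and j': "j' \<in> {..<n}" and eq: "e j = e j'"
    have "e j $ k j = e j' $ k j" using eq by simp
    then show "j = j'" using ekj[of j j] ekj[of j j'] j j' Wp knm[of j] by (auto split: if_splits)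
  qed
  have eind: "independent (e ` {..<n})"
  proof (rule independent_if_scalars_zero)
    show "finite (e ` {..<n})" by simp
    fix f x assume sum0: "(\<Sum>x\<in>e ` {..<n}. f x *\<^sub>R x) = 0" and x: "x \<in> e ` {..<n}"
    then obtain j where j: "j < n" and xe: "x = e j" by auto
    have "(\<Sum>x\<in>e ` {..<n}. f x *\<^sub>R x) $ k j = (\<Sum>j'<n. f (e j') * e j' $ k j)"
      by (simp add: sum_component sum.reindex[OF einj])
    also have "\<dots> = (\<Sum>j'\<in>{j}. f (e j') * e j' $ k j)"
      by (rule sum.mono_neutral_right) (use j ekj[OF j] in auto)
    also have "\<dots> = f x * W (k j)" using ekj[OF j j] xe by simp
    finally have "f x * W (k j) = 0" using sum0 by simp
    then show "f x = 0" using Wp knm[OF j] by auto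
  qed
  have eV: "\<forall>i<n. \<exists>v\<in>Vset. \<exists>c. e i = c *\<^sub>R v"
  proof (intro allI impI)
    fix i assume i: "i < n"
    have "v i \<in> Vset" unfolding Vset_def
      by (rule CollectI, rule exI[of _ "k i"], rule exI[of _ m])
         (use knm[OF i] in \<open>auto simp: v_def vec_eq_iff axis_def\<close>)
    then show "\<exists>v\<in>Vset. \<exists>c. e i = c *\<^sub>R v" unfolding e_def by blast
  qed
  show ?thesis unfolding V_parallelepiped_def
    using Qeq einj eind eV unfolding n_def by blast
qed

lemma norm1_split: "norm1 (x::real^'n::finite) = \<bar>x$i\<bar> + (\<Sum>j\<in>UNIV-{i}. \<bar>x$j\<bar>)"
  unfolding norm1_def by (simp add: sum.remove)

lemma D_coord:
  fixes z y :: "real^'n::finite"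
  assumes d2: "CARD('n) \<ge> 2" and y: "y \<in> pos_orthant" and n: "norm1 (z - y) < r"
  defines "b \<equiv> coord_sum z - r"
  shows "b < coord_sum y"
    and "max 0 (z$i - r) < y$i"
    and "y$i < max 0 (z$i - r) + min (z$i) (min b r) + (coord_sum y - b)"
proof -
  have cz: "coord_sum z = z$i + (\<Sum>j\<in>UNIV-{i}. z$j)" by (rule coord_sum_split)
  have cy: "coord_sum y = y$i + (\<Sum>j\<in>UNIV-{i}. y$j)" by (rule coord_sum_split)
  have nz: "norm1 (z - y) = \<bar>z$i - y$i\<bar> + (\<Sum>j\<in>UNIV-{i}. \<bar>z$j - y$j\<bar>)"
    using norm1_split[of "z - y" i] by simp
  have s1: "(\<Sum>j\<in>UNIV-{i}. z$j - y$j) \<le> (\<Sum>j\<in>UNIV-{i}. \<bar>z$j - y$j\<bar>)"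
    by (rule sum_mono) auto
  have s2: "(\<Sum>j\<in>UNIV-{i}. z$j - y$j) = (\<Sum>j\<in>UNIV-{i}. z$j) - (\<Sum>j\<in>UNIV-{i}. y$j)"
    by (rule sum_subtractf)
  have ne: "UNIV - {i} \<noteq> {}"
  proof
    assume "UNIV - {i} = {}"
    then have "UNIV = {i}" by auto
    then have "CARD('n) = 1" by (metis card.empty card.insert empty_iff finite.intros(1) One_nat_def)
    then show False using d2 by simp
  qed
  have pos: "(\<Sum>j\<in>UNIV-{i}. y$j) > 0"
    by (rule sum_pos) (use y ne in \<open>auto simp: pos_orthant_def\<close>)
  have yi: "y$i > 0" using y by (auto simp: pos_orthant_def)
  show "b < coord_sum y" using n nz s1 s2 cz cy unfolding b_def by linarith
  have a1: "z$i - r < y$i" using n nz by (smt (verit) sum_nonneg abs_ge_zero)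
  show "max 0 (z$i - r) < y$i" using a1 yi by simp
  have a2: "y$i < coord_sum y" using cy pos by simp
  have a30: "y$i - z$i + ((\<Sum>j\<in>UNIV-{i}. z$j) - (\<Sum>j\<in>UNIV-{i}. y$j)) < r"
    using n nz s1 s2 abs_ge_minus_self[of "z$i - y$i"] by linarith
  have a3: "y$i - z$i < (coord_sum y - b) / 2"
    using a30 unfolding b_def cz cy by (simp add: field_simps)
  show "y$i < max 0 (z$i - r) + min (z$i) (min b r) + (coord_sum y - b)"
    using a2 a3 \<open>b < coord_sum y\<close> by (auto simp: min_def max_def split: if_splits)
qed

lemma sum_le_card_bound:
  fixes f :: "'n::finite \<Rightarrow> real"
  assumes "\<And>i. i \<noteq> m \<Longrightarrow> f i \<le> K"
  shows "(\<Sum>i\<in>UNIV-{m}. f i) \<le> (real CARD('n) - 1) * K"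
proof -
  have "(\<Sum>i\<in>UNIV-{m}. f i) \<le> of_nat (card (UNIV - {m})) * K"
    by (rule sum_bounded_above) (use assms in auto)
  also have "card (UNIV - {m::'n}) = CARD('n) - 1" by (simp add: card_Diff_singleton)
  also have "real (CARD('n) - 1) = real CARD('n) - 1"
    by (simp add: of_nat_diff Suc_leI)
  finally show ?thesis .
qed

lemma mu_lower:
  fixes z :: "real^'n::finite"
  assumes d2: "CARD('n) \<ge> 2" and zpos: "z \<in> pos_orthant"
    and zmax: "\<And>i. z$i \<le> z$m"
    and rC: "r \<ge> 2 * real CARD('n) + 4" and bC: "coord_sum z - r > 2 * real CARD('n) + 4"
  defines "b \<equiv> coord_sum z - r"
  shows "ennreal (exp (-(b+2)) * (\<Prod>i\<in>UNIV-{m}. (min (z$i) (min b r) + 1) / (4 * real CARD('n))))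
           \<le> mu {y \<in> pos_orthant. norm1 (z - y) < r}"
proof -
  define d where "d = real CARD('n)"
  have d2': "d \<ge> 2" using d2 unfolding d_def by simp
  define h where "h i = (min (z$i) (min b r) + 1) / (4 * d)" for i
  define c where "c i = z$i + 1/(4*d) - h i" for i
  define S where "S = (\<Sum>i\<in>UNIV-{m}. c i)"
  define H where "H = (\<Sum>i\<in>UNIV-{m}. h i)"
  define A where "A = max (b + 2 - z$m) (min S (b + 1 - H) / 2)"
  define \<theta> where "\<theta> = A / S"
  define a where "a i = \<theta> * c i" for i
  have zp: "z$i > 0" for i using zpos by (auto simp: pos_orthant_def)
  have bpos: "b > 2 * d + 4" using bC unfolding b_def d_def by simp
  have rpos: "r \<ge> 2 * d + 4" using rC unfolding d_def by simp
  have hpos: "h i > 0" for i using zp[of i] bpos rpos d2' unfolding h_def by (auto intro!: divide_pos_pos)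
  have hle: "h i \<le> (z$i + 1) / (4*d)" "h i \<le> (b + 1) / (4*d)" "h i \<le> (r + 1) / (4*d)" for i
    unfolding h_def using d2' by (auto intro!: divide_right_mono)
  have cpos: "c i > 0" for i
  proof -
    have "(z$i + 1) / (4*d) = z$i/(4*d) + 1/(4*d)" by (simp add: add_divide_distrib)
    moreover have "z$i/(4*d) < z$i" using zp[of i] d2' by (simp add: divide_less_eq)
    ultimately show ?thesis using hle(1)[of i] unfolding c_def by linarith
  qed
  have csz: "coord_sum z = z$m + (\<Sum>i\<in>UNIV-{m}. z$i)" by (rule coord_sum_split)
  have zm_big: "z$m \<ge> (b + r) / d"
  proof -
    have "coord_sum z \<le> d * z$m"
      unfolding coord_sum_def d_def using sum_bounded_above[of UNIV "\<lambda>i. z$i" "z$m"] zmax by simp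
    then show ?thesis using d2' unfolding b_def by (simp add: divide_le_eq mult.commute)
  qed
  have zm4: "z$m \<ge> 4"
  proof -
    have "(b + r) / d \<ge> (4*d) / d" using bpos rpos d2' by (intro divide_right_mono) auto
    then show ?thesis using zm_big d2' by simp
  qed
  have Hz: "H \<le> (d - 1) * ((z$m + 1) / (4*d))"
    unfolding H_def d_def
    by (rule sum_le_card_bound) (use hle(1) zmax d2' in \<open>fastforce simp: d_def intro: order_trans divide_right_mono\<close>)
  have Hb: "H \<le> (d - 1) * ((b + 1) / (4*d))"
    unfolding H_def d_def by (rule sum_le_card_bound) (use hle(2) in \<open>simp add: d_def\<close>)
  have Hr: "H \<le> (d - 1) * ((r + 1) / (4*d))"
    unfolding H_def d_def by (rule sum_le_card_bound) (use hle(3) in \<open>simp add: d_def\<close>)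
  have q: "(d - 1) * (X / (4*d)) \<le> X / 4" if "X \<ge> 0" for X
  proof -
    have "(d - 1) * (X / (4*d)) = ((d-1)/d) * (X/4)" using d2' by (simp add: field_simps)
    also have "\<dots> \<le> 1 * (X/4)" using d2' that by (intro mult_right_mono) auto
    finally show ?thesis by simp
  qed
  have Hz': "H \<le> (z$m + 1)/4" using Hz q[of "z$m + 1"] zm4 d2' by linarith
  have Hb': "H \<le> (b + 1)/4" using Hb q[of "b + 1"] bpos d2' by linarith
  have Hr': "H \<le> (r + 1)/4" using Hr q[of "r + 1"] rpos d2' by linarith
  have Hpos: "H \<ge> 0" unfolding H_def using hpos by (simp add: sum_nonneg less_imp_le)
  have ne: "UNIV - {m} \<noteq> {}"
  proof
    assume "UNIV - {m} = {}"
    then have "UNIV = {m}" by auto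
    then have "CARD('n) = 1" by (metis card.empty card.insert empty_iff finite.intros(1) One_nat_def)
    then show False using d2 by simp
  qed
  have Spos: "S > 0" unfolding S_def by (rule sum_pos) (use cpos ne in auto)
  have SH: "S = (b + r - z$m) + (d - 1) / (4*d) - H"
  proof -
    have "S = (\<Sum>i\<in>UNIV-{m}. z$i) + (\<Sum>i\<in>UNIV-{m}. 1/(4*d)) - H"
      unfolding S_def H_def c_def by (simp add: sum.distrib sum_subtractf)
    also have "(\<Sum>i\<in>UNIV-{m}. 1/(4*d)) = (d - 1) / (4*d)"
      using d2 by (simp add: card_Diff_singleton d_def of_nat_diff)
    finally show ?thesis using csz unfolding b_def by simp
  qed
  have dd: "(d - 1) / (4*d) \<ge> 0" using d2' by simp
  have A0: "H + 1 < z$m" using Hz' zm4 by argo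
  have A1: "b + 2 - z$m < b + 1 - H" using A0 by linarith
  have A2: "b + 2 - z$m \<le> S" using SH Hr' rpos dd d2' by argo
  have A3: "b + 1 - H > 0" using Hb' bpos d2' by argo
  have Apos: "A > 0" unfolding A_def using Spos A3 by (simp add: max_def min_def)
  have AS: "A \<le> S" unfolding A_def using A2 Spos A3 by (simp add: max_def min_def)
  have AH: "A < b + 1 - H" unfolding A_def using A1 A3 Spos by (simp add: max_def min_def)
  have Azm: "b + 2 - z$m \<le> A" unfolding A_def by simp
  have th0: "\<theta> > 0" "\<theta> \<le> 1" unfolding \<theta>_def using Apos AS Spos by auto
  have suma: "(\<Sum>i\<in>UNIV-{m}. a i) = A"
  proof -
    have "(\<Sum>i\<in>UNIV-{m}. a i) = \<theta> * S" unfolding a_def S_def by (simp add: sum_distrib_left)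
    then show ?thesis unfolding \<theta>_def using Spos by simp
  qed
  have apos: "a i > 0" for i unfolding a_def using th0 cpos[of i] by simp
  have ale: "a i \<le> c i" for i unfolding a_def using mult_right_mono[of \<theta> 1 "c i"] th0 cpos[of i] by simp
  define R where "R = {x::real^'n. (\<forall>i. i \<noteq> m \<longrightarrow> a i \<le> x$i \<and> x$i \<le> a i + h i) \<and> b + 1 \<le> coord_sum x \<and> coord_sum x \<le> b + 2}"
  have Rsets: "R \<in> sets lebesgue" and Rmeas: "emeasure lebesgue R = ennreal ((\<Prod>i\<in>UNIV-{m}. h i) * (b + 2 - (b + 1)))"
  proof -
    have hnn: "\<forall>i. i \<noteq> m \<longrightarrow> 0 \<le> h i" using hpos less_imp_le by blast
    have bb: "b + 1 \<le> b + 2" by simp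
    note sm = slab_measure[where m=m and w=h and \<alpha>=a and c="b+1" and c'="b+2", OF hnn bb]
    show "R \<in> sets lebesgue" unfolding R_def by (rule sm(1))
    show "emeasure lebesgue R = ennreal ((\<Prod>i\<in>UNIV-{m}. h i) * (b + 2 - (b + 1)))" unfolding R_def by (rule sm(2))
  qed
  have RD: "x \<in> {y \<in> pos_orthant. norm1 (z - y) < r} \<inter> pos_orthant \<and> norm1 x \<le> b + 2" if x: "x \<in> R" for x
  proof -
    have xi: "a i \<le> x$i \<and> x$i \<le> a i + h i" if "i \<noteq> m" for i using x that unfolding R_def by auto
    have cx: "b + 1 \<le> coord_sum x" "coord_sum x \<le> b + 2" using x unfolding R_def by auto
    have csx: "coord_sum x = x$m + (\<Sum>i\<in>UNIV-{m}. x$i)" by (rule coord_sum_split)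
    have s1: "(\<Sum>i\<in>UNIV-{m}. x$i) \<ge> A" unfolding suma[symmetric] by (rule sum_mono) (use xi in auto)
    have s2: "(\<Sum>i\<in>UNIV-{m}. x$i) \<le> A + H"
    proof -
      have "(\<Sum>i\<in>UNIV-{m}. x$i) \<le> (\<Sum>i\<in>UNIV-{m}. a i + h i)" by (rule sum_mono) (use xi in auto)
      then show ?thesis by (simp add: sum.distrib suma H_def)
    qed
    have xm: "x$m > 0" "x$m \<le> z$m" using csx s1 s2 cx AH Azm by linarith+
    have xpos: "x \<in> pos_orthant" unfolding pos_orthant_def
    proof (intro CollectI allI)
      fix i show "0 < x$i" using xm xi[of i] apos[of i] by (cases "i = m") auto
    qed
    have xiz: "z$i - x$i \<ge> - 1/(4*d)" if "i \<noteq> m" for i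
      using xi[OF that] ale[of i] unfolding c_def by linarith
    have absb: "\<bar>z$i - x$i\<bar> \<le> (z$i - x$i) + 1/(2*d)" if "i \<noteq> m" for i
      using xiz[OF that] d2' by (simp add: abs_if field_simps)
    have "norm1 (z - x) = \<bar>z$m - x$m\<bar> + (\<Sum>i\<in>UNIV-{m}. \<bar>z$i - x$i\<bar>)"
      using norm1_split[of "z - x" m] by simp
    also have "\<dots> \<le> (z$m - x$m) + (\<Sum>i\<in>UNIV-{m}. (z$i - x$i) + 1/(2*d))"
      using xm by (intro add_mono sum_mono absb) auto
    also have "(\<Sum>i\<in>UNIV-{m}. (z$i - x$i) + 1/(2*d)) = (\<Sum>i\<in>UNIV-{m}. z$i) - (\<Sum>i\<in>UNIV-{m}. x$i) + (d - 1)/(2*d)"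
      using d2 by (simp add: sum.distrib sum_subtractf card_Diff_singleton d_def of_nat_diff)
    also have "(d - 1)/(2*d) \<le> 1/2" using d2' by (simp add: field_simps)
    finally have "norm1 (z - x) \<le> coord_sum z - coord_sum x + 1/2" using csz csx by linarith
    then have "norm1 (z - x) < r" using cx unfolding b_def by linarith
    moreover have "norm1 x = coord_sum x"
    proof -
      have "\<forall>i. 0 < x$i" using xpos unfolding pos_orthant_def by simp
      then show ?thesis unfolding norm1_def coord_sum_def by (simp add: abs_of_pos)
    qed
    ultimately show ?thesis using xpos cx by auto
  qed
  have "ennreal (exp (-(b+2))) * emeasure lebesgue R = (\<integral>\<^sup>+ x. ennreal (exp (-(b+2))) * indicator R x \<partial>lebesgue)"
    using Rsets by (simp add: nn_integral_cmult_indicator)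
  also have "\<dots> \<le> mu {y \<in> pos_orthant. norm1 (z - y) < r}"
    unfolding mu_def
  proof (intro nn_integral_mono)
    fix x
    show "ennreal (exp (-(b+2))) * indicator R x \<le> ennreal (exp (- norm1 x)) * indicator ({y \<in> pos_orthant. norm1 (z - y) < r} \<inter> pos_orthant) x"
    proof (cases "x \<in> R")
      case True
      then show ?thesis using RD[OF True] by (auto simp: indicator_def)
    qed (simp add: indicator_def)
  qed
  finally have fin: "ennreal (exp (-(b+2))) * ennreal (\<Prod>i\<in>UNIV-{m}. h i) \<le> mu {y \<in> pos_orthant. norm1 (z - y) < r}"
    using Rmeas by simp
  have pn: "0 \<le> (\<Prod>i\<in>UNIV-{m}. h i)" by (rule prod_nonneg) (use hpos in \<open>auto intro: less_imp_le\<close>)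
  have "ennreal (exp (-(b+2)) * (\<Prod>i\<in>UNIV-{m}. h i)) \<le> mu {y \<in> pos_orthant. norm1 (z - y) < r}"
    using fin pn by (simp add: ennreal_mult)
  then show ?thesis unfolding h_def d_def .
qed

lemma main_inner:
  fixes z \<xi> :: "real^'n::finite"
  assumes d2: "CARD('n) \<ge> 2" and zpos: "z \<in> pos_orthant"
    and rC: "r \<ge> 2 * real CARD('n) + 4" and bC: "coord_sum z - r > 2 * real CARD('n) + 4"
    and \<xi>D: "\<xi> \<in> {y \<in> pos_orthant. norm1 (z - y) < r}"
    and tb: "coord_sum z - r < t"
  shows "\<exists>P. V_parallelepiped P \<and> P \<subseteq> hplane t \<and> {y \<in> pos_orthant. norm1 (z - y) < r} \<inter> hplane t \<subseteq> P \<and> hproj t \<xi> \<in> P \<and>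
     hmeasure P \<le> ennreal (real CARD('n) * exp 2 * (12 * real CARD('n)) ^ (CARD('n) - 1) * (1 + max (t - (coord_sum z - r)) (coord_sum \<xi> - (coord_sum z - r))) ^ (CARD('n) - 1) * exp (coord_sum z - r)) * mu {y \<in> pos_orthant. norm1 (z - y) < r}"
proof -
  define d where "d = real CARD('n)"
  have d2': "d \<ge> 2" using d2 unfolding d_def by simp
  define b where "b = coord_sum z - r"
  define DD where "DD = {y \<in> pos_orthant. norm1 (z - y) < r}"
  define u where "u = t - b"
  define v where "v = coord_sum \<xi> - b"
  define M where "M = max u v"
  have bpos: "b > 2 * d + 4" using bC unfolding b_def d_def by simp
  have rpos: "r \<ge> 2 * d + 4" using rC unfolding d_def by simp
  have \<xi>pos: "\<xi> \<in> pos_orthant" and \<xi>n: "norm1 (z - \<xi>) < r" using \<xi>D by auto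
  have upos: "u > 0" using tb unfolding u_def b_def by simp
  have vpos: "v > 0" using D_coord(1)[OF d2 \<xi>pos \<xi>n] unfolding v_def b_def by simp
  have Mpos: "M > 0" and uM: "u \<le> M" and vM: "v \<le> M" unfolding M_def using upos by auto
  obtain m where zmax: "\<And>i. z$i \<le> z$m"
  proof -
    have fin: "finite (range (\<lambda>i. z$i))" by simp
    have "Max (range (\<lambda>i. z$i)) \<in> range (\<lambda>i. z$i)" by (rule Max_in[OF fin]) simp
    then obtain m where zm0: "Max (range (\<lambda>i. z$i)) = z$m" by blast
    have "z$i \<le> z$m" for i unfolding zm0[symmetric] by (rule Max_ge[OF fin]) simp
    then show ?thesis using that by blast
  qed
  have zp: "z$i > 0" for i using zpos by (auto simp: pos_orthant_def)
  define lw where "lw i = min (z$i) (min b r)" for i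
  define L where "L i = max 0 (z$i - r)" for i
  define \<alpha> where "\<alpha> i = L i - M" for i
  define W where "W i = lw i + 3 * M" for i
  have lwpos: "lw i > 0" for i unfolding lw_def using zp[of i] bpos rpos d2' by auto
  have Wpos: "\<forall>i. i \<noteq> m \<longrightarrow> 0 < W i" unfolding W_def using lwpos Mpos by (simp add: add_pos_pos)
  define P where "P = {y::real^'n. coord_sum y = t \<and> (\<forall>i. i \<noteq> m \<longrightarrow> \<alpha> i \<le> y$i \<and> y$i \<le> \<alpha> i + W i)}"
  have VP: "V_parallelepiped P" unfolding P_def by (rule V_par_box[OF d2 Wpos])
  have Ph: "P \<subseteq> hplane t" unfolding P_def hplane_def by auto
  have DP: "DD \<inter> hplane t \<subseteq> P"
  proof
    fix y assume y: "y \<in> DD \<inter> hplane t"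
    then have ypos: "y \<in> pos_orthant" and yn: "norm1 (z - y) < r" and yt: "coord_sum y = t"
      unfolding DD_def hplane_def by auto
    have "\<alpha> i \<le> y$i \<and> y$i \<le> \<alpha> i + W i" for i
      using D_coord(2,3)[OF d2 ypos yn, of i] yt uM Mpos
      unfolding \<alpha>_def W_def L_def lw_def u_def b_def by auto
    then show "y \<in> P" unfolding P_def using yt by auto
  qed
  have ones_i: "(ones :: real^'n) $ i = 1" for i by (simp add: ones_def)
  have cs_ones: "coord_sum (ones :: real^'n) = d" by (simp add: coord_sum_def ones_def d_def)
  have \<xi>P: "hproj t \<xi> \<in> P"
  proof -
    define sh where "sh = (coord_sum \<xi> - t) / d"
    have hp: "hproj t \<xi> = \<xi> - sh *\<^sub>R ones" unfolding hproj_def sh_def d_def by simp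
    have cs: "coord_sum (hproj t \<xi>) = t"
      unfolding hp using d2' by (simp add: coord_sum_diff coord_sum_scale cs_ones sh_def)
    have shM: "\<bar>sh\<bar> \<le> M"
    proof -
      have "coord_sum \<xi> - t = v - u" unfolding u_def v_def by simp
      then have "\<bar>coord_sum \<xi> - t\<bar> \<le> M" using uM vM upos vpos by (simp add: abs_le_iff)
      moreover have "\<bar>sh\<bar> \<le> \<bar>coord_sum \<xi> - t\<bar>"
      proof -
        have "\<bar>coord_sum \<xi> - t\<bar> * 1 \<le> \<bar>coord_sum \<xi> - t\<bar> * d" by (rule mult_left_mono) (use d2' in auto)
        then show ?thesis unfolding sh_def abs_divide using d2' by (simp add: divide_le_eq)
      qed
      ultimately show ?thesis by linarith
    qed
    have "\<alpha> i \<le> hproj t \<xi> $ i \<and> hproj t \<xi> $ i \<le> \<alpha> i + W i" for i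
    proof -
      have "hproj t \<xi> $ i = \<xi>$i - sh" unfolding hp by (simp add: ones_i)
      then show ?thesis
        using D_coord(2,3)[OF d2 \<xi>pos \<xi>n, of i] shM vM Mpos abs_le_iff[of sh M]
        unfolding \<alpha>_def W_def L_def lw_def v_def b_def by auto
    qed
    then show ?thesis unfolding P_def using cs by auto
  qed
  have Wnn: "\<forall>i. i \<noteq> m \<longrightarrow> 0 \<le> W i + 1" using Wpos by (simp add: less_imp_le add_nonneg_nonneg)
  have tt: "t \<le> t + d" using d2' by simp
  define T where "T = {x::real^'n. (\<forall>i. i \<noteq> m \<longrightarrow> \<alpha> i \<le> x$i \<and> x$i \<le> \<alpha> i + (W i + 1)) \<and> t \<le> coord_sum x \<and> coord_sum x \<le> t + d}"
  note sm = slab_measure[where m=m and w="\<lambda>i. W i + 1" and \<alpha>=\<alpha> and c=t and c'="t+d", OF Wnn tt]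
  have Tsets: "T \<in> sets lebesgue" unfolding T_def by (rule sm(1))
  have Tmeas: "emeasure lebesgue T = ennreal ((\<Prod>i\<in>UNIV-{m}. W i + 1) * d)"
    unfolding T_def using sm(2) by simp
  have sq1: "sqrt d \<ge> 1" using d2' by simp
  have sqd: "sqrt d \<le> d"
  proof -
    have "sqrt d * 1 \<le> sqrt d * sqrt d" by (rule mult_left_mono[OF sq1]) (use d2' in simp)
    then show ?thesis using d2' by simp
  qed
  have hn_i: "(hnormal :: real^'n) $ i = 1 / sqrt d" for i by (simp add: hnormal_def ones_i d_def)
  have cs_hn: "coord_sum (hnormal :: real^'n) = sqrt d"
  proof -
    have "coord_sum (hnormal :: real^'n) = (1 / sqrt d) * d" by (simp add: hnormal_def coord_sum_scale cs_ones d_def)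
    also have "\<dots> = sqrt d" using d2' by (simp add: real_div_sqrt)
    finally show ?thesis .
  qed
  have prismT: "{x + s *\<^sub>R hnormal | x s. x \<in> P \<and> s \<in> {0..1}} \<subseteq> T"
  proof
    fix w assume "w \<in> {x + s *\<^sub>R hnormal | x s. x \<in> P \<and> s \<in> {0..1}}"
    then obtain x s where w: "w = x + s *\<^sub>R hnormal" and xP: "x \<in> P" and s: "0 \<le> s" "s \<le> 1" by auto
    have ssq: "s \<le> sqrt d" using s sq1 by linarith
    have s1: "0 \<le> s / sqrt d" "s / sqrt d \<le> 1" using s sq1 ssq by (auto simp: divide_le_eq)
    have s3: "s * sqrt d \<le> 1 * sqrt d" by (rule mult_right_mono) (use s sq1 in auto)
    have s2: "0 \<le> s * sqrt d" "s * sqrt d \<le> d" using s sq1 sqd s3 by (simp, linarith)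
    have "coord_sum w = t + s * sqrt d" using xP unfolding w P_def by (simp add: coord_sum_add coord_sum_scale cs_hn)
    moreover have "w $ i = x $ i + s / sqrt d" for i unfolding w by (simp add: hn_i)
    ultimately show "w \<in> T" using xP s1 s2 unfolding T_def P_def by fastforce
  qed
  have Hm: "hmeasure P \<le> ennreal ((\<Prod>i\<in>UNIV-{m}. W i + 1) * d)"
    unfolding hmeasure_def using emeasure_mono[OF prismT Tsets] Tmeas by simp
  define Ph where "Ph = (\<Prod>i\<in>UNIV-{m}. (lw i + 1) / (4 * d))"
  have muL: "ennreal (exp (-(b+2)) * Ph) \<le> mu DD"
    using mu_lower[OF d2 zpos zmax rC bC] unfolding Ph_def lw_def d_def b_def DD_def by simp
  define K where "K = d * exp 2 * (12 * d) ^ (CARD('n) - 1) * (1 + M) ^ (CARD('n) - 1) * exp b"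
  have Kpos: "K \<ge> 0" unfolding K_def using d2' Mpos by simp
  have cardm: "card (UNIV - {m}) = CARD('n) - 1" by (simp add: card_Diff_singleton)
  have real_ineq: "(\<Prod>i\<in>UNIV-{m}. W i + 1) * d \<le> K * (exp (-(b+2)) * Ph)"
  proof -
    have e: "exp 2 * exp b * exp (-(b+2)) = 1" by (simp add: mult_exp_exp)
    let ?X = "(12 * d) ^ (CARD('n) - 1)" and ?Y = "(1 + M) ^ (CARD('n) - 1)"
    have "K * (exp (-(b+2)) * Ph) = d * (?X * ?Y * Ph) * (exp 2 * exp b * exp (-(b+2)))"
      unfolding K_def by (simp only: mult_ac)
    also have "\<dots> = d * (?X * ?Y * Ph)" using e by simp
    also have "?X * ?Y * Ph = (\<Prod>i\<in>UNIV-{m}. 12 * d) * (\<Prod>i\<in>UNIV-{m}. 1 + M) * (\<Prod>i\<in>UNIV-{m}. (lw i + 1) / (4 * d))"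
      unfolding Ph_def by (simp only: prod_constant cardm)
    also have "\<dots> = (\<Prod>i\<in>UNIV-{m}. 12 * d * (1 + M) * ((lw i + 1) / (4 * d)))"
      by (simp only: prod.distrib)
    also have "\<dots> = (\<Prod>i\<in>UNIV-{m}. 3 * (1 + M) * (lw i + 1))"
    proof (intro prod.cong refl)
      fix i
      have "d \<noteq> 0" using d2' by simp
      then show "12 * d * (1 + M) * ((lw i + 1) / (4 * d)) = 3 * (1 + M) * (lw i + 1)"
        by (simp add: field_simps)
    qed
    finally have eq: "K * (exp (-(b+2)) * Ph) = d * (\<Prod>i\<in>UNIV-{m}. 3 * (1 + M) * (lw i + 1))" .
    have "(\<Prod>i\<in>UNIV-{m}. W i + 1) \<le> (\<Prod>i\<in>UNIV-{m}. 3 * (1 + M) * (lw i + 1))"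
    proof (rule prod_mono)
      fix i assume "i \<in> UNIV - {m}"
      have "lw i + 3 * M + 1 \<le> 3 * (1 + M) * (lw i + 1)"
        using lwpos[of i] Mpos by (simp add: algebra_simps)
      then show "0 \<le> W i + 1 \<and> W i + 1 \<le> 3 * (1 + M) * (lw i + 1)"
        unfolding W_def using lwpos[of i] Mpos by simp
    qed
    then show ?thesis unfolding eq using d2' by simp
  qed
  have "hmeasure P \<le> ennreal (K * (exp (-(b+2)) * Ph))"
    by (rule order_trans[OF Hm ennreal_leI[OF real_ineq]])
  also have "\<dots> = ennreal K * ennreal (exp (-(b+2)) * Ph)"
    using Kpos by (rule ennreal_mult')
  also have "\<dots> \<le> ennreal K * mu DD"
    by (rule mult_left_mono[OF muL]) simp
  finally have fin: "hmeasure P \<le> ennreal K * mu DD" .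
  have KK: "K = real CARD('n) * exp 2 * (12 * real CARD('n)) ^ (CARD('n) - 1) * (1 + max (t - (coord_sum z - r)) (coord_sum \<xi> - (coord_sum z - r))) ^ (CARD('n) - 1) * exp (coord_sum z - r)"
    unfolding K_def d_def M_def u_def v_def b_def ..
  show ?thesis
    by (rule exI[of _ P]) (use VP Ph DP \<xi>P fin[unfolded KK] in \<open>unfold DD_def, blast\<close>)
qed

theorem proposition4p1:
  assumes "CARD('n::finite) \<ge> 2"
  shows "\<exists>Cd \<ge> 2. \<exists>C > 0. \<forall>(z::real^'n) r \<xi> t.
     let b = coord_sum z - r;
         D = {y \<in> pos_orthant. norm1 (z - y) < r}
     in z \<in> pos_orthant \<longrightarrow> r \<ge> Cd \<longrightarrow> b > Cd \<longrightarrow> \<xi> \<in> D \<longrightarrow>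
        b < t \<longrightarrow> t < b + 2 * r \<longrightarrow>
        (\<exists>P. V_parallelepiped P \<and> P \<subseteq> hplane t \<and> D \<inter> hplane t \<subseteq> P \<and> hproj t \<xi> \<in> P \<and>
             hmeasure P \<le> ennreal (C * (1 + max (t - b) (coord_sum \<xi> - b)) ^ (CARD('n) - 1) * exp b) * mu D)"
proof -
  define d where "d = real CARD('n)"
  have d2: "d \<ge> 2" using assms unfolding d_def by simp
  define Cd where "Cd = 2 * d + 4"
  define C where "C = d * exp 2 * (12 * d) ^ (CARD('n) - 1)"
  have "C > 0" using d2 unfolding C_def by simp
  moreover have "Cd \<ge> 2" using d2 unfolding Cd_def by simp
  moreover have "\<forall>(z::real^'n) r \<xi> t.
     let b = coord_sum z - r;
         D = {y \<in> pos_orthant. norm1 (z - y) < r}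
     in z \<in> pos_orthant \<longrightarrow> r \<ge> Cd \<longrightarrow> b > Cd \<longrightarrow> \<xi> \<in> D \<longrightarrow>
        b < t \<longrightarrow> t < b + 2 * r \<longrightarrow>
        (\<exists>P. V_parallelepiped P \<and> P \<subseteq> hplane t \<and> D \<inter> hplane t \<subseteq> P \<and> hproj t \<xi> \<in> P \<and>
             hmeasure P \<le> ennreal (C * (1 + max (t - b) (coord_sum \<xi> - b)) ^ (CARD('n) - 1) * exp b) * mu D)"
  proof (intro allI, unfold Let_def, intro impI)
    fix z :: "real^'n" and r \<xi> t
    assume zpos: "z \<in> pos_orthant" and rC: "r \<ge> Cd" and bC: "coord_sum z - r > Cd"
      and \<xi>D: "\<xi> \<in> {y \<in> pos_orthant. norm1 (z - y) < r}"
      and tb: "coord_sum z - r < t" and tb2: "t < coord_sum z - r + 2 * r"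
    have rC': "r \<ge> 2 * real CARD('n) + 4" using rC unfolding Cd_def d_def .
    have bC': "coord_sum z - r > 2 * real CARD('n) + 4" using bC unfolding Cd_def d_def .
    have X: "C * (1 + max (t - (coord_sum z - r)) (coord_sum \<xi> - (coord_sum z - r))) ^ (CARD('n) - 1) * exp (coord_sum z - r)
       = real CARD('n) * exp 2 * (12 * real CARD('n)) ^ (CARD('n) - 1) * (1 + max (t - (coord_sum z - r)) (coord_sum \<xi> - (coord_sum z - r))) ^ (CARD('n) - 1) * exp (coord_sum z - r)"
      unfolding C_def d_def ..
    show "\<exists>P. V_parallelepiped P \<and> P \<subseteq> hplane t \<and> {y \<in> pos_orthant. norm1 (z - y) < r} \<inter> hplane t \<subseteq> P \<and> hproj t \<xi> \<in> P \<and>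
             hmeasure P \<le> ennreal (C * (1 + max (t - (coord_sum z - r)) (coord_sum \<xi> - (coord_sum z - r))) ^ (CARD('n) - 1) * exp (coord_sum z - r)) * mu {y \<in> pos_orthant. norm1 (z - y) < r}"
      unfolding X by (rule main_inner[OF assms zpos rC' bC' \<xi>D tb])
  qed
  ultimately show ?thesis by blast
qed

end
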